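(* Let $p\in\{1,2\}$, $\varepsilon\ge0$ (with $\varepsilon=0$ when $p=2$), and let $\hat\nu$ be an optimal barycenter, i.e. a minimizer of $\Psi_p$. (i) If $\tilde\nu$ is the output of the reference algorithm with reference index $1$, then $\Psi_p(\tilde\nu)\le\frac{1+\varepsilon}{\lambda_1}\Psi_p(\hat\nu)$. If instead the reference index $j$ is chosen at random with probability $\lambda_j$ (and $\tilde\nu$ is the output of the reference algorithm with reference index $j$), then $\mathbb{E}[\Psi_p(\tilde\nu)]\le2(1+\varepsilon)\Psi_p(\hat\nu)$. (ii) If $\tilde\nu$ is the output of the pairwise algorithm, then $\Psi_p(\tilde\nu)\le2(1+\varepsilon)\Psi_p(\hat\nu)$.
   Context: $\|\cdot\|$ is the Euclidean norm on $\mathbb{R}^d$. For finitely supported probability measures $\mu,\nu$ on $\mathbb{R}^d$, $\mathcal{W}_p^p(\mu,\nu)\coloneqq\min_{\pi\in\Pi(\mu,\nu)}\int\|x-y\|^p\,d\pi$, with $\Pi(\mu,\nu)$ the set of couplings. Fix $N\ge2$, $\lambda\in\Delta_N\coloneqq\{\lambda\in(0,1)^N:\sum_i\lambda_i=1\}$, and discrete probability measures $\mu^i=\sum_{l=1}^{n_i}\mu^i_l\delta(x^i_l)$, $i=1,\dots,N$, with positive weights and pairwise distinct points for each $i$. $\Psi_p(\nu)\coloneqq\sum_{i=1}^N\lambda_i\mathcal{W}_p^p(\nu,\mu^i)$. Reference algorithm with reference index $j$ (parameters $p$, $\varepsilon$): let $\pi^{jj}\coloneqq\sum_k\mu^j_k\delta(x^j_k,x^j_k)$,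 and for $i\neq j$ let $\pi^{ji}=\sum_{k,l}\pi^{ji}_{k,l}\delta(x^j_k,x^i_l)\in\Pi(\mu^j,\mu^i)$ be an optimal plan for cost $\|x-y\|^p$ (so $\pi^{jj}_{k,l}=\mu^j_k$ if $l=k$ and $0$ otherwise). For $k=1,\dots,n_j$ let $f^j_k(m)\coloneqq\sum_{i=1}^N\lambda_i\sum_{l=1}^{n_i}\frac{\pi^{ji}_{k,l}}{\mu^j_k}\|m-x^i_l\|^p$ and choose $m^j_k$ with $f^j_k(m^j_k)\le(1+\varepsilon)\min_{m\in\mathbb{R}^d}f^j_k(m)$ (for $p=2$, $m^j_k$ is the exact minimizer, the weighted mean). The output is $\tilde\nu\coloneqq\sum_{k=1}^{n_j}\mu^j_k\delta(m^j_k)$. Pairwise algorithm (parameters $p$, $\varepsilon$): for all $i$ let $\pi^{ii}\coloneqq\sum_k\mu^i_k\delta(x^i_k,x^i_k)$; for $i<j$ let $\pi^{ij}=\sum_{k,l}\pi^{ij}_{k,l}\delta(x^i_k,x^j_l)\in\Pi(\mu^i,\mu^j)$ be an optimal plan for cost $\|x-y\|^p$, and $\pi^{ji}_{l,k}\coloneqq\pi^{ij}_{k,l}$ (the transposed plan). For each $i$ and $k=1,\dots,n_i$ let $f^i_k(m)\coloneqq\sum_{j=1}^N\lambda_j\sum_{l=1}^{n_j}\frac{\pi^{ij}_{k,l}}{\mu^i_k}\|m-x^j_l\|^p$ and choose $m^i_k$ with $f^i_k(m^i_k)\le(1+\varepsilon)\min_m f^i_k(m)$ (exact weighted mean for $p=2$).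 The output is $\tilde\nu\coloneqq\sum_{i=1}^N\lambda_i\sum_{k=1}^{n_i}\mu^i_k\delta(m^i_k)$. *)

theory Defs
  imports "HOL-Analysis.Analysis"
begin

text \<open>Finitely supported probability measures on a Euclidean space are represented
  by their weight functions: nu x is the mass of the atom at x.\<close>

definition supp :: "('a \<Rightarrow> real) \<Rightarrow> 'a set" where
  "supp \<nu> = {x. \<nu> x \<noteq> 0}"

definition is_fprob :: "('a \<Rightarrow> real) \<Rightarrow> bool" where
  "is_fprob \<nu> \<longleftrightarrow> (\<forall>x. \<nu> x \<ge> 0) \<and> finite (supp \<nu>) \<and> (\<Sum>x\<in>supp \<nu>. \<nu> x) = 1"

text \<open>Couplings of finitely supported measures: pi x y is the mass moved from x to y.\<close>
definition is_coupling :: "('a \<Rightarrow> real) \<Rightarrow> ('a \<Rightarrow> real) \<Rightarrow> ('a \<Rightarrow> 'a \<Rightarrow> real) \<Rightarrow> bool" where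
  "is_coupling \<mu> \<nu> \<pi> \<longleftrightarrow>
     (\<forall>x y. \<pi> x y \<ge> 0) \<and>
     (\<forall>x y. \<pi> x y \<noteq> 0 \<longrightarrow> x \<in> supp \<mu> \<and> y \<in> supp \<nu>) \<and>
     (\<forall>x. (\<Sum>y\<in>supp \<nu>. \<pi> x y) = \<mu> x) \<and>
     (\<forall>y. (\<Sum>x\<in>supp \<mu>. \<pi> x y) = \<nu> y)"

definition tcost :: "nat \<Rightarrow> ('a::real_normed_vector \<Rightarrow> real) \<Rightarrow> ('a \<Rightarrow> real) \<Rightarrow> ('a \<Rightarrow> 'a \<Rightarrow> real) \<Rightarrow> real" where
  "tcost p \<mu> \<nu> \<pi> = (\<Sum>x\<in>supp \<mu>. \<Sum>y\<in>supp \<nu>. \<pi> x y * norm (x - y) ^ p)"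

text \<open>W_p^p(mu,nu): the minimum (attained, hence equal to the infimum) of the transport cost.\<close>
definition Wpp :: "nat \<Rightarrow> ('a::real_normed_vector \<Rightarrow> real) \<Rightarrow> ('a \<Rightarrow> real) \<Rightarrow> real" where
  "Wpp p \<mu> \<nu> = Inf {tcost p \<mu> \<nu> \<pi> | \<pi>. is_coupling \<mu> \<nu> \<pi>}"

definition optimal_plan :: "nat \<Rightarrow> ('a::real_normed_vector \<Rightarrow> real) \<Rightarrow> ('a \<Rightarrow> real) \<Rightarrow> ('a \<Rightarrow> 'a \<Rightarrow> real) \<Rightarrow> bool" where
  "optimal_plan p \<mu> \<nu> \<pi> \<longleftrightarrow> is_coupling \<mu> \<nu> \<pi> \<and> tcost p \<mu> \<nu> \<pi> = Wpp p \<mu> \<nu>"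

definition Psi :: "nat \<Rightarrow> nat \<Rightarrow> (nat \<Rightarrow> real) \<Rightarrow> (nat \<Rightarrow> 'a::real_normed_vector \<Rightarrow> real) \<Rightarrow> ('a \<Rightarrow> real) \<Rightarrow> real" where
  "Psi p N lam \<mu> \<nu> = (\<Sum>i\<in>{1..N}. lam i * Wpp p \<nu> (\<mu> i))"

definition diag_plan :: "('a \<Rightarrow> real) \<Rightarrow> 'a \<Rightarrow> 'a \<Rightarrow> real" where
  "diag_plan \<mu> x y = (if x = y then \<mu> x else 0)"

definition push :: "('a \<Rightarrow> real) \<Rightarrow> ('a \<Rightarrow> 'b) \<Rightarrow> 'b \<Rightarrow> real" where
  "push \<mu> m z = (\<Sum>x\<in>{x\<in>supp \<mu>. m x = z}. \<mu> x)"

definition fobj :: "nat \<Rightarrow> nat \<Rightarrow> (nat \<Rightarrow> real) \<Rightarrow> (nat \<Rightarrow> 'a::real_normed_vector \<Rightarrow> real)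
    \<Rightarrow> ('a \<Rightarrow> real) \<Rightarrow> (nat \<Rightarrow> 'a \<Rightarrow> 'a \<Rightarrow> real) \<Rightarrow> 'a \<Rightarrow> 'a \<Rightarrow> real" where
  "fobj p N lam \<mu> \<mu>0 \<rho> x m =
     (\<Sum>i\<in>{1..N}. lam i * (\<Sum>y\<in>supp (\<mu> i). \<rho> i x y / \<mu>0 x * norm (m - y) ^ p))"

text \<open>Admissible data of the reference algorithm with reference index j:
  plans pi i (from mu j to mu i) and chosen points m x for atoms x of mu j.\<close>
definition ref_spec :: "nat \<Rightarrow> real \<Rightarrow> nat \<Rightarrow> (nat \<Rightarrow> real) \<Rightarrow> (nat \<Rightarrow> 'a::real_normed_vector \<Rightarrow> real)
    \<Rightarrow> nat \<Rightarrow> (nat \<Rightarrow> 'a \<Rightarrow> 'a \<Rightarrow> real) \<Rightarrow> ('a \<Rightarrow> 'a) \<Rightarrow> bool" where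
  "ref_spec p \<epsilon> N lam \<mu> j \<pi> m \<longleftrightarrow>
     \<pi> j = diag_plan (\<mu> j) \<and>
     (\<forall>i\<in>{1..N}. i \<noteq> j \<longrightarrow> optimal_plan p (\<mu> j) (\<mu> i) (\<pi> i)) \<and>
     (\<forall>x\<in>supp (\<mu> j).
        fobj p N lam \<mu> (\<mu> j) \<pi> x (m x) \<le> (1 + \<epsilon>) * Inf (range (fobj p N lam \<mu> (\<mu> j) \<pi> x)))"

text \<open>Admissible data of the pairwise algorithm: plans pi i j from mu i to mu j and
  chosen points m i x for atoms x of mu i.\<close>
definition pair_spec :: "nat \<Rightarrow> real \<Rightarrow> nat \<Rightarrow> (nat \<Rightarrow> real) \<Rightarrow> (nat \<Rightarrow> 'a::real_normed_vector \<Rightarrow> real)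
    \<Rightarrow> (nat \<Rightarrow> nat \<Rightarrow> 'a \<Rightarrow> 'a \<Rightarrow> real) \<Rightarrow> (nat \<Rightarrow> 'a \<Rightarrow> 'a) \<Rightarrow> bool" where
  "pair_spec p \<epsilon> N lam \<mu> \<pi> m \<longleftrightarrow>
     (\<forall>i\<in>{1..N}. \<pi> i i = diag_plan (\<mu> i)) \<and>
     (\<forall>i\<in>{1..N}. \<forall>j\<in>{1..N}. i < j \<longrightarrow>
        optimal_plan p (\<mu> i) (\<mu> j) (\<pi> i j) \<and> \<pi> j i = (\<lambda>x y. \<pi> i j y x)) \<and>
     (\<forall>i\<in>{1..N}. \<forall>x\<in>supp (\<mu> i).
        fobj p N lam \<mu> (\<mu> i) (\<pi> i) x (m i x) \<le> (1 + \<epsilon>) * Inf (range (fobj p N lam \<mu> (\<mu> i) (\<pi> i) x)))"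

definition pair_output :: "nat \<Rightarrow> (nat \<Rightarrow> real) \<Rightarrow> (nat \<Rightarrow> 'a \<Rightarrow> real) \<Rightarrow> (nat \<Rightarrow> 'a \<Rightarrow> 'a) \<Rightarrow> 'a \<Rightarrow> real" where
  "pair_output N lam \<mu> m z = (\<Sum>i\<in>{1..N}. lam i * push (\<mu> i) (m i) z)"

end

theory Submission
  imports Defs
begin


lemma wcs:
  fixes v :: "'b \<Rightarrow> 'a::real_inner" and w :: "'b \<Rightarrow> real"
  assumes "\<forall>i\<in>S. w i \<ge> 0"
  shows "(norm (\<Sum>i\<in>S. w i *\<^sub>R v i))^2 \<le> (\<Sum>i\<in>S. w i) * (\<Sum>i\<in>S. w i * (norm (v i))^2)"
proof -
  have "norm (\<Sum>i\<in>S. w i *\<^sub>R v i) \<le> (\<Sum>i\<in>S. norm (w i *\<^sub>R v i))" by (rule norm_sum)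
  also have "\<dots> = (\<Sum>i\<in>S. sqrt (w i) * (sqrt (w i) * norm (v i)))"
    using assms by (intro sum.cong) (auto simp: mult.assoc[symmetric])
  finally have 1: "norm (\<Sum>i\<in>S. w i *\<^sub>R v i) \<le> (\<Sum>i\<in>S. sqrt (w i) * (sqrt (w i) * norm (v i)))" .
  have "(norm (\<Sum>i\<in>S. w i *\<^sub>R v i))^2 \<le> (\<Sum>i\<in>S. sqrt (w i) * (sqrt (w i) * norm (v i)))^2"
    using 1 by (intro power_mono) auto
  also have "\<dots> \<le> (\<Sum>i\<in>S. (sqrt (w i))^2) * (\<Sum>i\<in>S. (sqrt (w i) * norm (v i))^2)"
    by (rule Cauchy_Schwarz_ineq_sum)
  also have "\<dots> = (\<Sum>i\<in>S. w i) * (\<Sum>i\<in>S. w i * (norm (v i))^2)"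
    using assms by (auto intro!: arg_cong2[where f="(*)"] sum.cong simp: power_mult_distrib)
  finally show ?thesis .
qed

lemma comb1:
  fixes d :: "nat \<Rightarrow> 'a::real_inner"
  assumes fin: "finite I" and j: "j \<in> I" and lp: "\<forall>i\<in>I. lam i > 0" and ls: "sum lam I = 1"
    and db: "\<forall>i\<in>I. (norm (d i))^2 \<le> b i"
    and gb: "\<forall>i\<in>I. \<forall>k\<in>I. g k i \<le> b k + b i - 2 * inner (d k) (d i)"
  shows "(\<Sum>i\<in>I-{j}. lam i * g j i) \<le> (\<Sum>i\<in>I. lam i * b i) / lam j"
proof -
  define L where "L = (\<Sum>i\<in>I-{j}. lam i)"
  define R where "R = (\<Sum>i\<in>I-{j}. lam i * b i)"
  define s where "s = (\<Sum>i\<in>I-{j}. lam i *\<^sub>R d i)"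
  have lj: "lam j > 0" using lp j by auto
  have L: "L = 1 - lam j" using ls j fin unfolding L_def by (simp add: sum_diff1)
  have "(\<Sum>i\<in>I-{j}. lam i * g j i) \<le> (\<Sum>i\<in>I-{j}. lam i * (b j + b i - 2 * inner (d j) (d i)))"
    using lp gb j by (intro sum_mono mult_left_mono) auto
  also have "\<dots> = L * b j + R - 2 * inner (d j) s"
    unfolding L_def R_def s_def
    by (simp add: algebra_simps sum.distrib sum_distrib_left sum_distrib_right inner_sum_right sum_subtractf)
  finally have 1: "(\<Sum>i\<in>I-{j}. lam i * g j i) \<le> L * b j + R - 2 * inner (d j) s" .
  have ss: "(norm s)^2 \<le> L * R"
  proof -
    have "(norm s)^2 \<le> L * (\<Sum>i\<in>I-{j}. lam i * (norm (d i))^2)"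
      unfolding s_def L_def using lp by (intro wcs) auto
    also have "\<dots> \<le> L * R" unfolding R_def
      using lp db unfolding L_def
      by (intro mult_left_mono sum_mono sum_nonneg) (auto intro: less_imp_le)
    finally show ?thesis .
  qed
  have "0 \<le> (norm (lam j *\<^sub>R d j + s))^2" by simp
  also have "\<dots> = lam j^2 * (norm (d j))^2 + 2 * lam j * inner (d j) s + (norm s)^2"
    unfolding power2_norm_eq_inner by (simp add: inner_add_left inner_add_right inner_commute algebra_simps power2_eq_square)
  finally have "- 2 * lam j * inner (d j) s \<le> lam j^2 * (norm (d j))^2 + (norm s)^2" by linarith
  hence "- 2 * inner (d j) s \<le> lam j * (norm (d j))^2 + (norm s)^2 / lam j"
    using lj by (simp add: field_simps power2_eq_square)
  also have "\<dots> \<le> lam j * b j + L * R / lam j"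
    using db j lj ss by (intro add_mono mult_left_mono divide_right_mono) auto
  finally have 2: "- 2 * inner (d j) s \<le> lam j * b j + L * R / lam j" .
  have 3: "(\<Sum>i\<in>I. lam i * b i) = lam j * b j + R"
    unfolding R_def using fin j by (simp add: sum.remove)
  have "L * b j + R - 2 * inner (d j) s \<le> L * b j + R + lam j * b j + L * R / lam j" using 2 by linarith
  also have "\<dots> = (\<Sum>i\<in>I. lam i * b i) / lam j"
    unfolding 3 L using lj by (simp add: field_simps)
  finally show ?thesis using 1 by linarith
qed



lemma comb2:
  fixes d :: "nat \<Rightarrow> 'a::real_inner"
  assumes fin: "finite I" and lp: "\<forall>i\<in>I. lam i > 0" and ls: "sum lam I = 1"
    and db: "\<forall>i\<in>I. (norm (d i))^2 \<le> b i"
    and gb: "\<forall>i\<in>I. \<forall>k\<in>I. g k i \<le> b k + b i - 2 * inner (d k) (d i)"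
  shows "(\<Sum>j\<in>I. lam j * (\<Sum>i\<in>I-{j}. lam i * g j i)) \<le> 2 * (\<Sum>i\<in>I. lam i * b i)"
proof -
  define D where "D = (\<Sum>i\<in>I. lam i *\<^sub>R d i)"
  define h where "h j i = b j + b i - 2 * inner (d j) (d i)" for j i
  have s1: "(\<Sum>j\<in>I. lam j * (\<Sum>i\<in>I-{j}. lam i * g j i)) \<le> (\<Sum>j\<in>I. lam j * (\<Sum>i\<in>I-{j}. lam i * h j i))"
    using lp gb unfolding h_def by (intro sum_mono mult_left_mono) (auto intro: less_imp_le)
  have s2: "(\<Sum>i\<in>I-{j}. lam i * h j i) = (\<Sum>i\<in>I. lam i * h j i) - lam j * h j j" if "j \<in> I" for j
    using fin that by (simp add: sum_diff1)
  have s3: "(\<Sum>j\<in>I. lam j * (\<Sum>i\<in>I-{j}. lam i * h j i)) = (\<Sum>j\<in>I. lam j * (\<Sum>i\<in>I. lam i * h j i)) - (\<Sum>j\<in>I. lam j * (lam j * h j j))"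
    by (simp add: s2 right_diff_distrib sum_subtractf cong: sum.cong)
  have a1: "(\<Sum>j\<in>I. lam j * (\<Sum>i\<in>I. lam i * b j)) = (\<Sum>i\<in>I. lam i * b i)"
    by (simp add: sum_distrib_right[symmetric] ls)
  have a2: "(\<Sum>j\<in>I. lam j * (\<Sum>i\<in>I. lam i * b i)) = (\<Sum>i\<in>I. lam i * b i)"
    by (simp add: sum_distrib_right[symmetric] ls)
  have a3: "(\<Sum>j\<in>I. lam j * (\<Sum>i\<in>I. lam i * inner (d j) (d i))) = inner D D"
    unfolding D_def by (simp add: inner_sum_left inner_sum_right sum_distrib_left mult.assoc inner_commute mult.left_commute)
  have a4: "(\<Sum>j\<in>I. lam j * (\<Sum>i\<in>I. lam i * (2 * inner (d j) (d i)))) = 2 * inner D D"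
  proof -
    have "(\<Sum>j\<in>I. lam j * (\<Sum>i\<in>I. lam i * (2 * inner (d j) (d i)))) = (\<Sum>j\<in>I. 2 * (lam j * (\<Sum>i\<in>I. lam i * inner (d j) (d i))))"
      by (intro sum.cong refl) (simp add: sum_distrib_left algebra_simps)
    also have "\<dots> = 2 * inner D D" by (simp add: sum_distrib_left[symmetric] a3)
    finally show ?thesis .
  qed
  have s4: "(\<Sum>j\<in>I. lam j * (\<Sum>i\<in>I. lam i * h j i)) = 2 * (\<Sum>i\<in>I. lam i * b i) - 2 * inner D D"
    unfolding h_def using a1 a2 a4
    by (simp add: algebra_simps sum.distrib sum_subtractf sum_distrib_left[symmetric])
  have s5: "(\<Sum>j\<in>I. lam j * (lam j * h j j)) \<ge> 0"
  proof (intro sum_nonneg)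
    fix x assume x: "x \<in> I"
    have "lam x \<ge> 0" using lp x by auto
    moreover have "h x x \<ge> 0" using db x unfolding h_def by (simp add: power2_norm_eq_inner[symmetric])
    ultimately show "0 \<le> lam x * (lam x * h x x)" by simp
  qed
  have "inner D D \<ge> 0" by simp
  thus ?thesis using s1 s3 s4 s5 by linarith
qed


lemma sq_expand: "(norm (x - y))^2 = (norm (z - x))^2 + (norm (z - y))^2 - 2 * inner (x - z) (y - (z::'a::real_inner))"
  unfolding power2_norm_eq_inner by (simp add: inner_diff_left inner_diff_right inner_commute algebra_simps)

lemma double_sum_sep:
  "(\<Sum>x\<in>X. \<Sum>y\<in>Y. a x * b y * (f x + g y)) = (\<Sum>x\<in>X. a x * f x) * sum b Y + sum a X * (\<Sum>y\<in>Y. b y * (g y::real))"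
proof -
  have "(\<Sum>x\<in>X. \<Sum>y\<in>Y. a x * b y * (f x + g y)) = (\<Sum>x\<in>X. a x * f x * sum b Y + a x * (\<Sum>y\<in>Y. b y * g y))"
  proof (intro sum.cong refl)
    fix x
    have "(\<Sum>y\<in>Y. a x * b y * (f x + g y)) = (\<Sum>y\<in>Y. a x * f x * b y + a x * (b y * g y))"
      by (intro sum.cong refl) (simp add: algebra_simps)
    also have "\<dots> = a x * f x * sum b Y + a x * (\<Sum>y\<in>Y. b y * g y)"
      by (simp add: sum.distrib sum_distrib_left)
    finally show "(\<Sum>y\<in>Y. a x * b y * (f x + g y)) = a x * f x * sum b Y + a x * (\<Sum>y\<in>Y. b y * g y)" .
  qed
  also have "\<dots> = (\<Sum>x\<in>X. a x * f x) * sum b Y + sum a X * (\<Sum>y\<in>Y. b y * g y)"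
    by (simp add: sum.distrib sum_distrib_right)
  finally show ?thesis .
qed

lemma perz:
  fixes A :: "nat \<Rightarrow> 'a::real_inner \<Rightarrow> real" and Y :: "nat \<Rightarrow> 'a set" and z :: 'a
  assumes p: "p = 1 \<or> p = 2" and A0: "\<forall>i\<in>I. \<forall>y\<in>Y i. A i y \<ge> 0" and A1: "\<forall>i\<in>I. sum (A i) (Y i) = 1"
  shows "\<exists>d::nat\<Rightarrow>'a. (\<forall>i\<in>I. (norm (d i))^2 \<le> (\<Sum>y\<in>Y i. A i y * norm (z - y)^p)) \<and>
    (\<forall>i\<in>I. \<forall>k\<in>I. (\<Sum>x\<in>Y k. \<Sum>y\<in>Y i. A k x * A i y * norm (x - y)^p)
        \<le> (\<Sum>y\<in>Y k. A k y * norm (z - y)^p) + (\<Sum>y\<in>Y i. A i y * norm (z - y)^p) - 2 * inner (d k) (d i))"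
  using p
proof
  assume p1: "p = 1"
  show ?thesis
  proof (intro exI[of _ "\<lambda>_. 0"] conjI ballI)
    fix i assume i: "i \<in> I"
    show "(norm (0::'a))^2 \<le> (\<Sum>y\<in>Y i. A i y * norm (z - y)^p)"
      using A0 i by (auto intro!: sum_nonneg)
  next
    fix i k assume i: "i \<in> I" and k: "k \<in> I"
    have "(\<Sum>x\<in>Y k. \<Sum>y\<in>Y i. A k x * A i y * norm (x - y)^p) \<le> (\<Sum>x\<in>Y k. \<Sum>y\<in>Y i. A k x * A i y * (norm (z - x) + norm (z - y)))"
      unfolding p1 using A0 i k
    proof (intro sum_mono mult_left_mono)
      fix x y
      have "norm (x - y) \<le> norm (z - x) + norm (z - y)"
        by (rule norm_diff_triangle_le[where x=x and y=z and z=y]) (simp_all add: norm_minus_commute[of x z])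
      thus "norm (x - y)^1 \<le> norm (z - x) + norm (z - y)" by simp
    next
      fix x y assume "x \<in> Y k" "y \<in> Y i"
      thus "0 \<le> A k x * A i y" using A0 i k by simp
    qed
    also have "\<dots> = (\<Sum>y\<in>Y k. A k y * norm (z - y)^p) + (\<Sum>y\<in>Y i. A i y * norm (z - y)^p)"
      unfolding double_sum_sep using A1 i k p1 by simp
    finally show "(\<Sum>x\<in>Y k. \<Sum>y\<in>Y i. A k x * A i y * norm (x - y)^p)
        \<le> (\<Sum>y\<in>Y k. A k y * norm (z - y)^p) + (\<Sum>y\<in>Y i. A i y * norm (z - y)^p) - 2 * inner (0::'a) 0"
      by simp
  qed
next
  assume p2: "p = 2"
  define d where "d i = (\<Sum>y\<in>Y i. A i y *\<^sub>R (y - z))" for i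
  show ?thesis
  proof (intro exI[of _ d] conjI ballI)
    fix i assume i: "i \<in> I"
    have "(norm (d i))^2 \<le> sum (A i) (Y i) * (\<Sum>y\<in>Y i. A i y * (norm (y - z))^2)"
      unfolding d_def using A0 i by (intro wcs) auto
    thus "(norm (d i))^2 \<le> (\<Sum>y\<in>Y i. A i y * norm (z - y)^p)"
      using A1 i p2 norm_minus_commute[of _ z] by simp
  next
    fix i k assume i: "i \<in> I" and k: "k \<in> I"
    have "(\<Sum>x\<in>Y k. \<Sum>y\<in>Y i. A k x * A i y * norm (x - y)^p) =
       (\<Sum>x\<in>Y k. \<Sum>y\<in>Y i. A k x * A i y * ((norm (z - x))^2 + (norm (z - y))^2))
       - 2 * (\<Sum>x\<in>Y k. \<Sum>y\<in>Y i. A k x * A i y * inner (x - z) (y - z))"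
    proof -
      have "(\<Sum>x\<in>Y k. \<Sum>y\<in>Y i. A k x * A i y * norm (x - y)^p) =
        (\<Sum>x\<in>Y k. \<Sum>y\<in>Y i. A k x * A i y * ((norm (z - x))^2 + (norm (z - y))^2) - 2 * (A k x * A i y * inner (x - z) (y - z)))"
      proof (intro sum.cong refl)
        fix x y
        show "A k x * A i y * norm (x - y)^p = A k x * A i y * ((norm (z - x))^2 + (norm (z - y))^2) - 2 * (A k x * A i y * inner (x - z) (y - z))"
          unfolding p2 by (subst sq_expand[of x y z]) (simp add: algebra_simps)
      qed
      also have "\<dots> = (\<Sum>x\<in>Y k. \<Sum>y\<in>Y i. A k x * A i y * ((norm (z - x))^2 + (norm (z - y))^2))
         - 2 * (\<Sum>x\<in>Y k. \<Sum>y\<in>Y i. A k x * A i y * inner (x - z) (y - z))"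
        by (simp add: sum_subtractf sum_distrib_left)
      finally show ?thesis .
    qed
    also have "(\<Sum>x\<in>Y k. \<Sum>y\<in>Y i. A k x * A i y * ((norm (z - x))^2 + (norm (z - y))^2))
        = (\<Sum>y\<in>Y k. A k y * norm (z - y)^p) + (\<Sum>y\<in>Y i. A i y * norm (z - y)^p)"
      unfolding double_sum_sep using A1 i k p2 by simp
    also have "(\<Sum>x\<in>Y k. \<Sum>y\<in>Y i. A k x * A i y * inner (x - z) (y - z)) = inner (d k) (d i)"
      unfolding d_def apply (simp add: inner_sum_left inner_sum_right sum_distrib_left mult.assoc)
      apply (subst sum.swap) by (simp add: mult.left_commute)
    finally show "(\<Sum>x\<in>Y k. \<Sum>y\<in>Y i. A k x * A i y * norm (x - y)^p)
        \<le> (\<Sum>y\<in>Y k. A k y * norm (z - y)^p) + (\<Sum>y\<in>Y i. A i y * norm (z - y)^p) - 2 * inner (d k) (d i)"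
      by (rule eq_refl)
  qed
qed


lemma tcost_nonneg: "is_coupling \<mu> \<nu> \<pi> \<Longrightarrow> tcost p \<mu> \<nu> \<pi> \<ge> 0"
  unfolding tcost_def is_coupling_def by (auto intro!: sum_nonneg)

lemma Wpp_le: "is_coupling \<mu> \<nu> \<pi> \<Longrightarrow> Wpp p \<mu> \<nu> \<le> tcost p \<mu> \<nu> \<pi>"
  unfolding Wpp_def
  by (rule cInf_lower) (auto simp: bdd_below_def intro!: exI[of _ 0] tcost_nonneg)

lemma notin_supp: "x \<notin> supp \<mu> \<Longrightarrow> \<mu> x = 0"
  unfolding supp_def by auto

lemma W_le_map:
  fixes \<nu> \<mu> :: "'a::real_normed_vector \<Rightarrow> real" and S :: "'b set" and f :: "'b \<Rightarrow> 'a"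
    and w :: "'b \<Rightarrow> 'a \<Rightarrow> real"
  assumes S: "finite S" and fmu: "finite (supp \<mu>)" and w0: "\<forall>s\<in>S. \<forall>y\<in>supp \<mu>. w s y \<ge> 0"
    and mu: "\<forall>y\<in>supp \<mu>. (\<Sum>s\<in>S. w s y) = \<mu> y"
    and nu: "\<forall>z. \<nu> z = (\<Sum>s\<in>{s\<in>S. f s = z}. \<Sum>y\<in>supp \<mu>. w s y)"
  shows "Wpp p \<nu> \<mu> \<le> (\<Sum>s\<in>S. \<Sum>y\<in>supp \<mu>. w s y * norm (f s - y)^p)"
proof -
  define \<pi> where "\<pi> z y = (if y \<in> supp \<mu> then (\<Sum>s\<in>{s\<in>S. f s = z}. w s y) else 0)" for z y
  have finF: "finite {s\<in>S. f s = z}" for z using S by simp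
  have Z: "w s y = 0" if "\<nu> (f s) = 0" "s \<in> S" "y \<in> supp \<mu>" for s y
  proof -
    have "(\<Sum>s'\<in>{s'\<in>S. f s' = f s}. \<Sum>y\<in>supp \<mu>. w s' y) = 0" using nu that by simp
    hence "\<forall>s'\<in>{s'\<in>S. f s' = f s}. (\<Sum>y\<in>supp \<mu>. w s' y) = 0"
      using w0 finF by (subst (asm) sum_nonneg_eq_0_iff) (auto intro!: sum_nonneg)
    hence "(\<Sum>y\<in>supp \<mu>. w s y) = 0" using that by auto
    thus ?thesis using w0 fmu that by (subst (asm) sum_nonneg_eq_0_iff) auto
  qed
  have sub: "supp \<nu> \<subseteq> f ` S"
  proof
    fix z assume "z \<in> supp \<nu>"
    hence "\<nu> z \<noteq> 0" unfolding supp_def by auto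
    hence "{s\<in>S. f s = z} \<noteq> {}" using nu by force
    thus "z \<in> f ` S" by auto
  qed
  have finnu: "finite (supp \<nu>)" using sub S finite_subset by blast
  have regroup: "(\<Sum>z\<in>supp \<nu>. \<Sum>s\<in>{s\<in>S. f s = z}. h s) = (\<Sum>s\<in>S. h s)"
    if h0: "\<And>s. s \<in> S \<Longrightarrow> \<nu> (f s) = 0 \<Longrightarrow> h s = 0" for h :: "'b \<Rightarrow> real"
  proof -
    have "(\<Sum>s\<in>S. h s) = (\<Sum>z\<in>f ` S. \<Sum>s\<in>{s\<in>S. f s = z}. h s)"
      using S by (rule sum.image_gen)
    also have "\<dots> = (\<Sum>z\<in>supp \<nu>. \<Sum>s\<in>{s\<in>S. f s = z}. h s)"
    proof (rule sum.mono_neutral_right[OF _ sub])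
      show "finite (f ` S)" using S by simp
      show "\<forall>z\<in>f ` S - supp \<nu>. (\<Sum>s\<in>{s\<in>S. f s = z}. h s) = 0"
        using h0 by (auto simp: supp_def intro!: sum.neutral)
    qed
    finally show ?thesis by simp
  qed
  have c1: "\<forall>x y. 0 \<le> \<pi> x y" unfolding \<pi>_def using w0 by (auto intro!: sum_nonneg)
  have c2: "\<forall>x y. \<pi> x y \<noteq> 0 \<longrightarrow> x \<in> supp \<nu> \<and> y \<in> supp \<mu>"
  proof (intro allI impI)
    fix x y assume nz: "\<pi> x y \<noteq> 0"
    hence y: "y \<in> supp \<mu>" unfolding \<pi>_def by (auto split: if_splits)
    show "x \<in> supp \<nu> \<and> y \<in> supp \<mu>"
    proof (rule ccontr)
      assume "\<not> (x \<in> supp \<nu> \<and> y \<in> supp \<mu>)"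
      hence "\<nu> x = 0" using y unfolding supp_def by auto
      hence "\<pi> x y = 0" unfolding \<pi>_def using Z y by (auto intro!: sum.neutral)
      thus False using nz by simp
    qed
  qed
  have c3: "\<forall>x. (\<Sum>y\<in>supp \<mu>. \<pi> x y) = \<nu> x"
  proof
    fix x show "(\<Sum>y\<in>supp \<mu>. \<pi> x y) = \<nu> x"
      unfolding \<pi>_def nu[rule_format, of x] by (simp add: sum.swap[of _ "supp \<mu>"])
  qed
  have c4: "\<forall>y. (\<Sum>x\<in>supp \<nu>. \<pi> x y) = \<mu> y"
  proof
    fix y show "(\<Sum>x\<in>supp \<nu>. \<pi> x y) = \<mu> y"
    proof (cases "y \<in> supp \<mu>")
      case True
      have "(\<Sum>x\<in>supp \<nu>. \<pi> x y) = (\<Sum>x\<in>supp \<nu>. \<Sum>s\<in>{s\<in>S. f s = x}. w s y)"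
        unfolding \<pi>_def using True by simp
      also have "\<dots> = (\<Sum>s\<in>S. w s y)" using Z True by (intro regroup) auto
      finally show ?thesis using mu True by simp
    next
      case False
      thus ?thesis unfolding \<pi>_def by (simp add: notin_supp)
    qed
  qed
  have coup: "is_coupling \<nu> \<mu> \<pi>" unfolding is_coupling_def using c1 c2 c3 c4 by blast
  have "tcost p \<nu> \<mu> \<pi> = (\<Sum>z\<in>supp \<nu>. \<Sum>y\<in>supp \<mu>. \<Sum>s\<in>{s\<in>S. f s = z}. w s y * norm (f s - y)^p)"
    unfolding tcost_def \<pi>_def by (intro sum.cong refl) (simp add: sum_distrib_right)
  also have "\<dots> = (\<Sum>z\<in>supp \<nu>. \<Sum>s\<in>{s\<in>S. f s = z}. \<Sum>y\<in>supp \<mu>. w s y * norm (f s - y)^p)"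
    by (intro sum.cong refl sum.swap)
  also have "\<dots> = (\<Sum>s\<in>S. \<Sum>y\<in>supp \<mu>. w s y * norm (f s - y)^p)"
    using Z by (intro regroup) (auto intro!: sum.neutral)
  finally show ?thesis using Wpp_le[OF coup, of p] by simp
qed


lemma fprob_supp_pos: "is_fprob \<mu> \<Longrightarrow> x \<in> supp \<mu> \<Longrightarrow> \<mu> x > 0"
proof -
  assume f: "is_fprob \<mu>" and x: "x \<in> supp \<mu>"
  have "\<mu> x \<ge> 0" using f unfolding is_fprob_def by blast
  moreover have "\<mu> x \<noteq> 0" using x unfolding supp_def by blast
  ultimately show "\<mu> x > 0" by (simp add: less_le)
qed

lemma diag_coupling: "is_fprob \<mu> \<Longrightarrow> is_coupling \<mu> \<mu> (diag_plan \<mu>)"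
proof -
  assume f: "is_fprob \<mu>"
  have fin: "finite (supp \<mu>)" using f unfolding is_fprob_def by blast
  have c1: "\<forall>x y. 0 \<le> diag_plan \<mu> x y" using f unfolding is_fprob_def diag_plan_def by simp
  have c2: "\<forall>x y. diag_plan \<mu> x y \<noteq> 0 \<longrightarrow> x \<in> supp \<mu> \<and> y \<in> supp \<mu>"
    unfolding diag_plan_def supp_def by simp
  have c3: "\<forall>x. (\<Sum>y\<in>supp \<mu>. diag_plan \<mu> x y) = \<mu> x"
  proof
    fix x
    have "(\<Sum>y\<in>supp \<mu>. diag_plan \<mu> x y) = (if x \<in> supp \<mu> then \<mu> x else 0)"
      unfolding diag_plan_def using fin by (simp add: sum.delta)
    thus "(\<Sum>y\<in>supp \<mu>. diag_plan \<mu> x y) = \<mu> x" using notin_supp[of x \<mu>] by simp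
  qed
  have c4: "\<forall>y. (\<Sum>x\<in>supp \<mu>. diag_plan \<mu> x y) = \<mu> y"
  proof
    fix y
    have "(\<Sum>x\<in>supp \<mu>. diag_plan \<mu> x y) = (if y \<in> supp \<mu> then \<mu> y else 0)"
      unfolding diag_plan_def using fin by (simp add: sum.delta')
    thus "(\<Sum>x\<in>supp \<mu>. diag_plan \<mu> x y) = \<mu> y" using notin_supp[of y \<mu>] by simp
  qed
  show ?thesis unfolding is_coupling_def using c1 c2 c3 c4 by blast
qed

lemma tcost_diag: "p \<ge> 1 \<Longrightarrow> tcost p \<mu> \<mu> (diag_plan \<mu>) = 0"
  unfolding tcost_def
proof (intro sum.neutral ballI)
  fix x y assume "p \<ge> 1"
  thus "diag_plan \<mu> x y * norm (x - y) ^ p = 0" unfolding diag_plan_def by simp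
qed

lemma transp_coupling: "is_coupling \<mu> \<nu> \<pi> \<Longrightarrow> is_coupling \<nu> \<mu> (\<lambda>x y. \<pi> y x)"
  unfolding is_coupling_def by auto

lemma tcost_transp: "tcost p \<nu> \<mu> (\<lambda>x y. \<pi> y x) = tcost p \<mu> \<nu> \<pi>"
  unfolding tcost_def by (subst sum.swap) (simp only: norm_minus_commute)

lemma Wpp_sym: "Wpp p \<mu> \<nu> = Wpp p \<nu> \<mu>"
proof -
  have "{tcost p \<mu> \<nu> \<pi> | \<pi>. is_coupling \<mu> \<nu> \<pi>} \<subseteq> {tcost p \<nu> \<mu> \<pi> | \<pi>. is_coupling \<nu> \<mu> \<pi>}"
    for \<mu> \<nu> :: "'a \<Rightarrow> real"
  proof
    fix t assume "t \<in> {tcost p \<mu> \<nu> \<pi> | \<pi>. is_coupling \<mu> \<nu> \<pi>}"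
    then obtain \<pi> where "t = tcost p \<mu> \<nu> \<pi>" "is_coupling \<mu> \<nu> \<pi>" by auto
    thus "t \<in> {tcost p \<nu> \<mu> \<pi> | \<pi>. is_coupling \<nu> \<mu> \<pi>}"
      using transp_coupling tcost_transp by (metis (mono_tags, lifting) mem_Collect_eq)
  qed
  hence "{tcost p \<mu> \<nu> \<pi> | \<pi>. is_coupling \<mu> \<nu> \<pi>} = {tcost p \<nu> \<mu> \<pi> | \<pi>. is_coupling \<nu> \<mu> \<pi>}"
    by (intro equalityI) auto
  thus ?thesis unfolding Wpp_def by simp
qed

lemma prod_coupling: "is_fprob \<mu> \<Longrightarrow> is_fprob \<nu> \<Longrightarrow> is_coupling \<mu> \<nu> (\<lambda>x y. \<mu> x * \<nu> y)"
  unfolding is_coupling_def is_fprob_def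
  by (auto simp: supp_def sum_distrib_left[symmetric] sum_distrib_right[symmetric])

lemma near_opt:
  assumes "is_fprob \<mu>" "is_fprob \<nu>" "\<delta> > 0"
  shows "\<exists>\<pi>. is_coupling \<mu> \<nu> \<pi> \<and> tcost p \<mu> \<nu> \<pi> < Wpp p \<mu> \<nu> + \<delta>"
proof -
  have ne: "{tcost p \<mu> \<nu> \<pi> | \<pi>. is_coupling \<mu> \<nu> \<pi>} \<noteq> {}"
    using prod_coupling[OF assms(1,2)] by auto
  have "Wpp p \<mu> \<nu> < Wpp p \<mu> \<nu> + \<delta>" using assms by simp
  from cInf_lessD[OF ne this[unfolded Wpp_def]] show ?thesis unfolding Wpp_def by auto
qed

lemma core:
  fixes \<mu> :: "nat \<Rightarrow> 'a::real_normed_vector \<Rightarrow> real"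
  assumes eps: "\<epsilon> \<ge> 0" and lam0: "\<forall>i\<in>{1..N}. lam i \<ge> 0" and f0: "is_fprob \<mu>0"
    and coup: "\<forall>i\<in>{1..N}. is_coupling \<mu>0 (\<mu> i) (\<rho> i)"
    and spec: "\<forall>x\<in>supp \<mu>0. fobj p N lam \<mu> \<mu>0 \<rho> x (m x) \<le> (1 + \<epsilon>) * Inf (range (fobj p N lam \<mu> \<mu>0 \<rho> x))"
  shows "(\<Sum>i\<in>{1..N}. lam i * (\<Sum>x\<in>supp \<mu>0. \<Sum>y\<in>supp (\<mu> i). \<rho> i x y * norm (m x - y)^p))
     \<le> (1 + \<epsilon>) * (\<Sum>i\<in>{1..N}. lam i * tcost p \<mu>0 (\<mu> i) (\<rho> i))"
proof -
  define F where "F x t = (\<Sum>i\<in>{1..N}. lam i * (\<Sum>y\<in>supp (\<mu> i). \<rho> i x y * norm (t - y)^p))" for x t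
  have Fe: "\<mu>0 x * fobj p N lam \<mu> \<mu>0 \<rho> x t = F x t" if x: "x \<in> supp \<mu>0" for x t
  proof -
    have "\<mu>0 x > 0" using fprob_supp_pos[OF f0 x] .
    thus ?thesis unfolding fobj_def F_def
      by (simp add: sum_distrib_left mult.left_commute)
  qed
  have swap: "(\<Sum>i\<in>{1..N}. lam i * (\<Sum>x\<in>supp \<mu>0. \<Sum>y\<in>supp (\<mu> i). \<rho> i x y * norm (g x - y)^p)) = (\<Sum>x\<in>supp \<mu>0. F x (g x))" for g
    unfolding F_def sum_distrib_left by (rule sum.swap)
  have "(\<Sum>x\<in>supp \<mu>0. F x (m x)) \<le> (\<Sum>x\<in>supp \<mu>0. (1 + \<epsilon>) * F x x)"
  proof (rule sum_mono)
    fix x assume x: "x \<in> supp \<mu>0"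
    have pos: "\<mu>0 x > 0" using fprob_supp_pos[OF f0 x] .
    have nn: "fobj p N lam \<mu> \<mu>0 \<rho> x t \<ge> 0" for t
      unfolding fobj_def using lam0 coup pos
      by (auto intro!: sum_nonneg mult_nonneg_nonneg divide_nonneg_pos simp: is_coupling_def)
    have "Inf (range (fobj p N lam \<mu> \<mu>0 \<rho> x)) \<le> fobj p N lam \<mu> \<mu>0 \<rho> x x"
      by (rule cInf_lower) (auto simp: bdd_below_def intro!: exI[of _ 0] nn)
    hence "fobj p N lam \<mu> \<mu>0 \<rho> x (m x) \<le> (1 + \<epsilon>) * fobj p N lam \<mu> \<mu>0 \<rho> x x"
      using spec x eps by (meson order_trans mult_left_mono add_nonneg_nonneg zero_le_one)
    hence "\<mu>0 x * fobj p N lam \<mu> \<mu>0 \<rho> x (m x) \<le> \<mu>0 x * ((1 + \<epsilon>) * fobj p N lam \<mu> \<mu>0 \<rho> x x)"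
      using pos by (intro mult_left_mono) auto
    also have "\<mu>0 x * ((1 + \<epsilon>) * fobj p N lam \<mu> \<mu>0 \<rho> x x) = (1 + \<epsilon>) * F x x"
      using Fe[OF x, of x] by (simp add: mult.left_commute)
    finally show "F x (m x) \<le> (1 + \<epsilon>) * F x x" using Fe[OF x, of "m x"] by simp
  qed
  also have "\<dots> = (1 + \<epsilon>) * (\<Sum>i\<in>{1..N}. lam i * tcost p \<mu>0 (\<mu> i) (\<rho> i))"
    using swap[of "\<lambda>x. x"] unfolding tcost_def by (simp add: sum_distrib_left[symmetric])
  finally show ?thesis using swap[of m] by simp
qed


lemma sum_prod2: "(\<Sum>s\<in>A\<times>B. h s) = (\<Sum>z\<in>A. \<Sum>x\<in>B. h (z, x))"
  by (simp add: sum.cartesian_product)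

lemma glue:
  fixes \<nu> \<mu>j \<mu>i :: "'a::real_normed_vector \<Rightarrow> real" and \<gamma>j \<gamma>i :: "'a \<Rightarrow> 'a \<Rightarrow> real"
  assumes fn: "is_fprob \<nu>" and fj: "is_fprob \<mu>j" and fi: "is_fprob \<mu>i"
    and cj: "is_coupling \<nu> \<mu>j \<gamma>j" and ci: "is_coupling \<nu> \<mu>i \<gamma>i"
  shows "Wpp p \<mu>j \<mu>i \<le> (\<Sum>z\<in>supp \<nu>. \<nu> z * (\<Sum>x\<in>supp \<mu>j. \<Sum>y\<in>supp \<mu>i.
            (\<gamma>j z x / \<nu> z) * (\<gamma>i z y / \<nu> z) * norm (x - y)^p))"
proof -
  define S where "S = supp \<nu> \<times> supp \<mu>j"
  define w where "w s y = \<gamma>j (fst s) (snd s) * \<gamma>i (fst s) y / \<nu> (fst s)" for s y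
  have finn: "finite (supp \<nu>)" using fn unfolding is_fprob_def by blast
  have finj: "finite (supp \<mu>j)" using fj unfolding is_fprob_def by blast
  have fini: "finite (supp \<mu>i)" using fi unfolding is_fprob_def by blast
  have finS: "finite S" unfolding S_def using finn finj by simp
  have npos: "\<nu> z > 0" if "z \<in> supp \<nu>" for z using fprob_supp_pos[OF fn that] .
  have cj1: "\<forall>x y. \<gamma>j x y \<ge> 0" "\<forall>z. (\<Sum>x\<in>supp \<mu>j. \<gamma>j z x) = \<nu> z" "\<forall>x. (\<Sum>z\<in>supp \<nu>. \<gamma>j z x) = \<mu>j x"
    using cj unfolding is_coupling_def by blast+
  have ci1: "\<forall>x y. \<gamma>i x y \<ge> 0" "\<forall>z. (\<Sum>x\<in>supp \<mu>i. \<gamma>i z x) = \<nu> z" "\<forall>x. (\<Sum>z\<in>supp \<nu>. \<gamma>i z x) = \<mu>i x"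
    using ci unfolding is_coupling_def by blast+
  have n0: "\<forall>z. \<nu> z \<ge> 0" using fn unfolding is_fprob_def by blast
  have w0: "\<forall>s\<in>S. \<forall>y\<in>supp \<mu>i. w s y \<ge> 0"
    unfolding w_def using cj1(1) ci1(1) n0 by (auto intro!: divide_nonneg_nonneg mult_nonneg_nonneg)
  have mu: "\<forall>y\<in>supp \<mu>i. (\<Sum>s\<in>S. w s y) = \<mu>i y"
  proof
    fix y assume y: "y \<in> supp \<mu>i"
    have "(\<Sum>s\<in>S. w s y) = (\<Sum>z\<in>supp \<nu>. \<Sum>x\<in>supp \<mu>j. w (z, x) y)"
      unfolding S_def by (simp add: sum.cartesian_product)
    also have "\<dots> = (\<Sum>z\<in>supp \<nu>. \<gamma>i z y)"
    proof (rule sum.cong[OF refl])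
      fix z assume z: "z \<in> supp \<nu>"
      have "(\<Sum>x\<in>supp \<mu>j. w (z, x) y) = (\<Sum>x\<in>supp \<mu>j. \<gamma>j z x) * \<gamma>i z y / \<nu> z"
        unfolding w_def by (simp add: sum_distrib_right sum_divide_distrib)
      also have "\<dots> = \<gamma>i z y" using cj1(2) npos[OF z] by simp
      finally show "(\<Sum>x\<in>supp \<mu>j. w (z, x) y) = \<gamma>i z y" .
    qed
    also have "\<dots> = \<mu>i y" using ci1(3) by simp
    finally show "(\<Sum>s\<in>S. w s y) = \<mu>i y" .
  qed
  have rowsum: "(\<Sum>y\<in>supp \<mu>i. w s y) = \<gamma>j (fst s) (snd s)" if s: "s \<in> S" for s
  proof -
    have z: "fst s \<in> supp \<nu>" using s unfolding S_def by auto
    have "(\<Sum>y\<in>supp \<mu>i. w s y) = \<gamma>j (fst s) (snd s) * (\<Sum>y\<in>supp \<mu>i. \<gamma>i (fst s) y) / \<nu> (fst s)"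
      unfolding w_def by (simp add: sum_distrib_left sum_divide_distrib)
    thus ?thesis using ci1(2) npos[OF z] by simp
  qed
  have nu: "\<forall>x0. \<mu>j x0 = (\<Sum>s\<in>{s\<in>S. snd s = x0}. \<Sum>y\<in>supp \<mu>i. w s y)"
  proof
    fix x0
    have "(\<Sum>s\<in>{s\<in>S. snd s = x0}. \<Sum>y\<in>supp \<mu>i. w s y) = (\<Sum>s\<in>{s\<in>S. snd s = x0}. \<gamma>j (fst s) (snd s))"
      using rowsum by (intro sum.cong) auto
    also have "\<dots> = (\<Sum>s\<in>S. if snd s = x0 then \<gamma>j (fst s) (snd s) else 0)"
      using finS by (rule sum.inter_filter)
    also have "\<dots> = (\<Sum>z\<in>supp \<nu>. \<Sum>x\<in>supp \<mu>j. if x = x0 then \<gamma>j z x else 0)"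
      unfolding S_def by (simp add: sum.cartesian_product split_beta)
    also have "\<dots> = (\<Sum>z\<in>supp \<nu>. if x0 \<in> supp \<mu>j then \<gamma>j z x0 else 0)"
      using finj by (simp add: sum.delta')
    also have "\<dots> = \<mu>j x0"
      using cj1(3) notin_supp[of x0 \<mu>j] by (cases "x0 \<in> supp \<mu>j") auto
    finally show "\<mu>j x0 = (\<Sum>s\<in>{s\<in>S. snd s = x0}. \<Sum>y\<in>supp \<mu>i. w s y)" by simp
  qed
  have "Wpp p \<mu>j \<mu>i \<le> (\<Sum>s\<in>S. \<Sum>y\<in>supp \<mu>i. w s y * norm (snd s - y)^p)"
    by (rule W_le_map[OF finS fini w0 mu nu])
  also have "\<dots> = (\<Sum>z\<in>supp \<nu>. \<Sum>x\<in>supp \<mu>j. \<Sum>y\<in>supp \<mu>i. w (z, x) y * norm (x - y)^p)"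
    unfolding S_def sum_prod2 by simp
  also have "\<dots> = (\<Sum>z\<in>supp \<nu>. \<nu> z * (\<Sum>x\<in>supp \<mu>j. \<Sum>y\<in>supp \<mu>i.
            (\<gamma>j z x / \<nu> z) * (\<gamma>i z y / \<nu> z) * norm (x - y)^p))"
  proof (rule sum.cong[OF refl])
    fix z assume z: "z \<in> supp \<nu>"
    have nz: "\<nu> z \<noteq> 0" using npos[OF z] by simp
    show "(\<Sum>x\<in>supp \<mu>j. \<Sum>y\<in>supp \<mu>i. w (z, x) y * norm (x - y)^p) = \<nu> z * (\<Sum>x\<in>supp \<mu>j. \<Sum>y\<in>supp \<mu>i.
            (\<gamma>j z x / \<nu> z) * (\<gamma>i z y / \<nu> z) * norm (x - y)^p)"
      unfolding w_def sum_distrib_left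
      by (intro sum.cong refl) (simp add: nz power2_eq_square)
  qed
  finally show ?thesis .
qed


lemma swap_w: "(\<Sum>i\<in>K. c i * (\<Sum>z\<in>Z. e z * h z i)) = (\<Sum>z\<in>Z. e z * (\<Sum>i\<in>K. c i * (h z i::real)))"
  unfolding sum_distrib_left
  apply (subst sum.swap)
  apply (intro sum.cong refl)
  by (rule mult.left_commute)

lemma Gbound:
  fixes \<mu> :: "nat \<Rightarrow> 'a::euclidean_space \<Rightarrow> real" and \<nu> :: "'a \<Rightarrow> real"
  assumes p: "p = 1 \<or> p = 2" and lam: "\<forall>i\<in>{1..N}. 0 < lam i" and ls: "sum lam {1..N} = 1"
    and fm: "\<forall>i\<in>{1..N}. is_fprob (\<mu> i)" and fn: "is_fprob \<nu>" and dpos: "\<delta> > 0"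
  shows "\<exists>GL. (\<forall>i\<in>{1..N}. \<forall>j\<in>{1..N}. Wpp p (\<mu> j) (\<mu> i) \<le> GL j i)
    \<and> (\<forall>j\<in>{1..N}. (\<Sum>i\<in>{1..N}-{j}. lam i * GL j i) \<le> (Psi p N lam \<mu> \<nu> + \<delta>) / lam j)
    \<and> (\<Sum>j\<in>{1..N}. lam j * (\<Sum>i\<in>{1..N}-{j}. lam i * GL j i)) \<le> 2 * (Psi p N lam \<mu> \<nu> + \<delta>)"
proof -
  define I where "I = {1..N}"
  have finI: "finite I" unfolding I_def by simp
  have "\<forall>i\<in>I. \<exists>\<pi>. is_coupling \<nu> (\<mu> i) \<pi> \<and> tcost p \<nu> (\<mu> i) \<pi> < Wpp p \<nu> (\<mu> i) + \<delta>"
    using near_opt[OF fn _ dpos] fm unfolding I_def by blast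
  then obtain \<gamma> where \<gamma>: "\<forall>i\<in>I. is_coupling \<nu> (\<mu> i) (\<gamma> i) \<and> tcost p \<nu> (\<mu> i) (\<gamma> i) < Wpp p \<nu> (\<mu> i) + \<delta>"
    by (metis bchoice)
  define A where "A z i y = \<gamma> i z y / \<nu> z" for z i y
  define b where "b z i = (\<Sum>y\<in>supp (\<mu> i). A z i y * norm (z - y)^p)" for z i
  define g where "g z j i = (\<Sum>x\<in>supp (\<mu> j). \<Sum>y\<in>supp (\<mu> i). A z j x * A z i y * norm (x - y)^p)" for z j i
  define GL where "GL j i = (\<Sum>z\<in>supp \<nu>. \<nu> z * g z j i)" for j i
  have npos: "\<nu> z > 0" if "z \<in> supp \<nu>" for z using fprob_supp_pos[OF fn that] .
  have G1: "\<forall>i\<in>I. \<forall>j\<in>I. Wpp p (\<mu> j) (\<mu> i) \<le> GL j i"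
  proof (intro ballI)
    fix i j assume i: "i \<in> I" and j: "j \<in> I"
    show "Wpp p (\<mu> j) (\<mu> i) \<le> GL j i"
    proof -
      have fj: "is_fprob (\<mu> j)" and fi: "is_fprob (\<mu> i)" using fm i j unfolding I_def by auto
      have cj: "is_coupling \<nu> (\<mu> j) (\<gamma> j)" and ci: "is_coupling \<nu> (\<mu> i) (\<gamma> i)" using \<gamma> i j by auto
      show ?thesis unfolding GL_def g_def A_def by (rule glue[OF fn fj fi cj ci])
    qed
  qed
  have tc: "tcost p \<nu> (\<mu> i) (\<gamma> i) = (\<Sum>z\<in>supp \<nu>. \<nu> z * b z i)" for i
    unfolding tcost_def b_def A_def sum_distrib_left
  proof (intro sum.cong refl)
    fix z y assume z: "z \<in> supp \<nu>"
    have "\<nu> z \<noteq> 0" using npos[OF z] by simp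
    thus "\<gamma> i z y * norm (z - y) ^ p = \<nu> z * (\<gamma> i z y / \<nu> z * norm (z - y) ^ p)" by simp
  qed
  have T: "(\<Sum>i\<in>I. lam i * tcost p \<nu> (\<mu> i) (\<gamma> i)) \<le> Psi p N lam \<mu> \<nu> + \<delta>"
  proof -
    have "(\<Sum>i\<in>I. lam i * tcost p \<nu> (\<mu> i) (\<gamma> i)) \<le> (\<Sum>i\<in>I. lam i * (Wpp p \<nu> (\<mu> i) + \<delta>))"
      using \<gamma> lam unfolding I_def by (intro sum_mono mult_left_mono) (auto intro: less_imp_le)
    also have "\<dots> = Psi p N lam \<mu> \<nu> + \<delta>"
      unfolding Psi_def I_def using ls by (simp add: distrib_left sum.distrib sum_distrib_right[symmetric])
    finally show ?thesis .
  qed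
  have perzb: "(\<forall>j\<in>I. (\<Sum>i\<in>I-{j}. lam i * g z j i) \<le> (\<Sum>i\<in>I. lam i * b z i) / lam j) \<and>
      (\<Sum>j\<in>I. lam j * (\<Sum>i\<in>I-{j}. lam i * g z j i)) \<le> 2 * (\<Sum>i\<in>I. lam i * b z i)"
    if z: "z \<in> supp \<nu>" for z
  proof -
    have A0: "\<forall>i\<in>I. \<forall>y\<in>supp (\<mu> i). A z i y \<ge> 0"
      using \<gamma> npos[OF z] unfolding A_def is_coupling_def by (auto intro: less_imp_le)
    have A1: "\<forall>i\<in>I. sum (A z i) (supp (\<mu> i)) = 1"
    proof
      fix i assume i: "i \<in> I"
      have "sum (A z i) (supp (\<mu> i)) = (\<Sum>y\<in>supp (\<mu> i). \<gamma> i z y) / \<nu> z"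
        unfolding A_def by (simp add: sum_divide_distrib)
      also have "(\<Sum>y\<in>supp (\<mu> i). \<gamma> i z y) = \<nu> z" using \<gamma> i unfolding is_coupling_def by blast
      finally show "sum (A z i) (supp (\<mu> i)) = 1" using npos[OF z] by simp
    qed
    obtain d :: "nat \<Rightarrow> 'a" where d1: "\<forall>i\<in>I. (norm (d i))^2 \<le> b z i"
      and d2: "\<forall>i\<in>I. \<forall>k\<in>I. g z k i \<le> b z k + b z i - 2 * inner (d k) (d i)"
      using perz[OF p A0 A1, of z] unfolding b_def g_def by blast
    have lamI: "\<forall>i\<in>I. lam i > 0" and lsI: "sum lam I = 1" using lam ls unfolding I_def by auto
    show ?thesis
      using comb1[OF finI _ lamI lsI d1 d2] comb2[OF finI lamI lsI d1 d2] by blast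
  qed
  have SW: "(\<Sum>i\<in>I. lam i * tcost p \<nu> (\<mu> i) (\<gamma> i)) = (\<Sum>z\<in>supp \<nu>. \<nu> z * (\<Sum>i\<in>I. lam i * b z i))"
    unfolding tc by (rule swap_w)
  have G2: "\<forall>j\<in>I. (\<Sum>i\<in>I-{j}. lam i * GL j i) \<le> (Psi p N lam \<mu> \<nu> + \<delta>) / lam j"
  proof
    fix j assume j: "j \<in> I"
    have "(\<Sum>i\<in>I-{j}. lam i * GL j i) = (\<Sum>z\<in>supp \<nu>. \<nu> z * (\<Sum>i\<in>I-{j}. lam i * g z j i))"
      unfolding GL_def by (rule swap_w)
    also have "\<dots> \<le> (\<Sum>z\<in>supp \<nu>. \<nu> z * ((\<Sum>i\<in>I. lam i * b z i) / lam j))"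
      using perzb j npos by (intro sum_mono mult_left_mono) (auto intro: less_imp_le)
    also have "\<dots> = (\<Sum>i\<in>I. lam i * tcost p \<nu> (\<mu> i) (\<gamma> i)) / lam j"
      unfolding SW by (simp only: times_divide_eq_right sum_divide_distrib[symmetric])
    also have "\<dots> \<le> (Psi p N lam \<mu> \<nu> + \<delta>) / lam j"
    proof (rule divide_right_mono[OF T])
      show "0 \<le> lam j" using lam j unfolding I_def by (auto intro: less_imp_le)
    qed
    finally show "(\<Sum>i\<in>I-{j}. lam i * GL j i) \<le> (Psi p N lam \<mu> \<nu> + \<delta>) / lam j" .
  qed
  have G3: "(\<Sum>j\<in>I. lam j * (\<Sum>i\<in>I-{j}. lam i * GL j i)) \<le> 2 * (Psi p N lam \<mu> \<nu> + \<delta>)"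
  proof -
    have "(\<Sum>j\<in>I. lam j * (\<Sum>i\<in>I-{j}. lam i * GL j i)) = (\<Sum>j\<in>I. lam j * (\<Sum>z\<in>supp \<nu>. \<nu> z * (\<Sum>i\<in>I-{j}. lam i * g z j i)))"
      unfolding GL_def by (intro sum.cong refl arg_cong2[where f="(*)"] swap_w)
    also have "\<dots> = (\<Sum>z\<in>supp \<nu>. \<nu> z * (\<Sum>j\<in>I. lam j * (\<Sum>i\<in>I-{j}. lam i * g z j i)))"
      by (rule swap_w)
    also have "\<dots> \<le> (\<Sum>z\<in>supp \<nu>. \<nu> z * (2 * (\<Sum>i\<in>I. lam i * b z i)))"
      using perzb npos by (intro sum_mono mult_left_mono) (auto intro: less_imp_le)
    also have "\<dots> = 2 * (\<Sum>i\<in>I. lam i * tcost p \<nu> (\<mu> i) (\<gamma> i))"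
      unfolding SW by (simp add: sum_distrib_left mult.left_commute)
    also have "\<dots> \<le> 2 * (Psi p N lam \<mu> \<nu> + \<delta>)" using T by simp
    finally show ?thesis .
  qed
  show ?thesis using G1 G2 G3 unfolding I_def by blast
qed


lemma push_W:
  assumes f0: "is_fprob \<mu>0" and f1: "is_fprob \<mu>1" and c: "is_coupling \<mu>0 \<mu>1 \<rho>"
  shows "Wpp p (push \<mu>0 m) \<mu>1 \<le> (\<Sum>x\<in>supp \<mu>0. \<Sum>y\<in>supp \<mu>1. \<rho> x y * norm (m x - y)^p)"
proof (rule W_le_map)
  show "finite (supp \<mu>0)" using f0 unfolding is_fprob_def by blast
  show "finite (supp \<mu>1)" using f1 unfolding is_fprob_def by blast
  show "\<forall>s\<in>supp \<mu>0. \<forall>y\<in>supp \<mu>1. 0 \<le> \<rho> s y" using c unfolding is_coupling_def by blast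
  show "\<forall>y\<in>supp \<mu>1. (\<Sum>s\<in>supp \<mu>0. \<rho> s y) = \<mu>1 y" using c unfolding is_coupling_def by blast
  have r: "\<forall>x. (\<Sum>y\<in>supp \<mu>1. \<rho> x y) = \<mu>0 x" using c unfolding is_coupling_def by blast
  show "\<forall>z. push \<mu>0 m z = (\<Sum>s\<in>{s \<in> supp \<mu>0. m s = z}. \<Sum>y\<in>supp \<mu>1. \<rho> s y)"
    unfolding push_def using r by simp
qed

lemma pair_W:
  fixes \<mu> :: "nat \<Rightarrow> 'a::real_normed_vector \<Rightarrow> real"
  assumes lam: "\<forall>i\<in>{1..N}. 0 < lam i" and fm: "\<forall>i\<in>{1..N}. is_fprob (\<mu> i)"
    and j: "j \<in> {1..N}" and c: "\<forall>i\<in>{1..N}. is_coupling (\<mu> i) (\<mu> j) (\<pi> i j)" and ls: "sum lam {1..N} = 1"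
  shows "Wpp p (pair_output N lam \<mu> m) (\<mu> j) \<le>
     (\<Sum>i\<in>{1..N}. lam i * (\<Sum>x\<in>supp (\<mu> i). \<Sum>y\<in>supp (\<mu> j). \<pi> i j x y * norm (m i x - y)^p))"
proof -
  define I where "I = {1..N}"
  define S where "S = Sigma I (\<lambda>i. supp (\<mu> i))"
  define w where "w s y = lam (fst s) * \<pi> (fst s) j (snd s) y" for s y
  define f where "f s = m (fst s) (snd s)" for s
  have finI: "finite I" unfolding I_def by simp
  have finm: "\<forall>i\<in>I. finite (supp (\<mu> i))" using fm unfolding I_def is_fprob_def by blast
  have finS: "finite S" unfolding S_def using finI finm by auto
  have sig: "(\<Sum>s\<in>S. h s) = (\<Sum>i\<in>I. \<Sum>x\<in>supp (\<mu> i). h (i, x))" for h :: "nat \<times> 'a \<Rightarrow> real"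
    unfolding S_def using sum.Sigma[OF finI finm, of "\<lambda>i x. h (i, x)"] by simp
  have cI: "\<forall>i\<in>I. is_coupling (\<mu> i) (\<mu> j) (\<pi> i j)" using c unfolding I_def by blast
  have "Wpp p (pair_output N lam \<mu> m) (\<mu> j) \<le> (\<Sum>s\<in>S. \<Sum>y\<in>supp (\<mu> j). w s y * norm (f s - y)^p)"
  proof (rule W_le_map[OF finS])
    show "finite (supp (\<mu> j))" using fm j unfolding is_fprob_def by blast
    show "\<forall>s\<in>S. \<forall>y\<in>supp (\<mu> j). 0 \<le> w s y"
    proof (intro ballI)
      fix s y assume s: "s \<in> S"
      hence i: "fst s \<in> I" unfolding S_def by auto
      have "lam (fst s) \<ge> 0" using lam i unfolding I_def by (simp add: less_imp_le)
      moreover have "\<pi> (fst s) j (snd s) y \<ge> 0" using cI i unfolding is_coupling_def by blast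
      ultimately show "0 \<le> w s y" unfolding w_def by simp
    qed
    show "\<forall>y\<in>supp (\<mu> j). (\<Sum>s\<in>S. w s y) = \<mu> j y"
    proof
      fix y
      have "(\<Sum>s\<in>S. w s y) = (\<Sum>i\<in>I. lam i * (\<Sum>x\<in>supp (\<mu> i). \<pi> i j x y))"
        unfolding sig w_def by (simp add: sum_distrib_left)
      also have "\<dots> = (\<Sum>i\<in>I. lam i * \<mu> j y)"
        using cI unfolding is_coupling_def by (intro sum.cong refl) auto
      also have "\<dots> = \<mu> j y" using ls unfolding I_def by (simp add: sum_distrib_right[symmetric])
      finally show "(\<Sum>s\<in>S. w s y) = \<mu> j y" .
    qed
    show "\<forall>z. pair_output N lam \<mu> m z = (\<Sum>s\<in>{s\<in>S. f s = z}. \<Sum>y\<in>supp (\<mu> j). w s y)"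
    proof
      fix z
      have rs: "(\<Sum>y\<in>supp (\<mu> j). w (i, x) y) = lam i * \<mu> i x" if "i \<in> I" for i x
        unfolding w_def using cI that unfolding is_coupling_def by (simp add: sum_distrib_left[symmetric])
      have "(\<Sum>s\<in>{s\<in>S. f s = z}. \<Sum>y\<in>supp (\<mu> j). w s y) = (\<Sum>s\<in>S. if f s = z then (\<Sum>y\<in>supp (\<mu> j). w s y) else 0)"
        using finS by (rule sum.inter_filter)
      also have "\<dots> = (\<Sum>i\<in>I. \<Sum>x\<in>supp (\<mu> i). if m i x = z then lam i * \<mu> i x else 0)"
        unfolding sig f_def using rs by (intro sum.cong refl) auto
      also have "\<dots> = (\<Sum>i\<in>I. lam i * (\<Sum>x\<in>{x\<in>supp (\<mu> i). m i x = z}. \<mu> i x))"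
      proof (rule sum.cong[OF refl])
        fix i assume i: "i \<in> I"
        have "(\<Sum>x\<in>{x\<in>supp (\<mu> i). m i x = z}. \<mu> i x) = (\<Sum>x\<in>supp (\<mu> i). if m i x = z then \<mu> i x else 0)"
          using finm i by (intro sum.inter_filter) auto
        thus "(\<Sum>x\<in>supp (\<mu> i). if m i x = z then lam i * \<mu> i x else 0) = lam i * (\<Sum>x\<in>{x\<in>supp (\<mu> i). m i x = z}. \<mu> i x)"
          by (simp add: sum_distrib_left if_distrib cong: if_cong)
      qed
      also have "\<dots> = pair_output N lam \<mu> m z" unfolding pair_output_def push_def I_def ..
      finally show "pair_output N lam \<mu> m z = (\<Sum>s\<in>{s\<in>S. f s = z}. \<Sum>y\<in>supp (\<mu> j). w s y)" by simp
    qed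
  qed
  also have "\<dots> = (\<Sum>i\<in>I. lam i * (\<Sum>x\<in>supp (\<mu> i). \<Sum>y\<in>supp (\<mu> j). \<pi> i j x y * norm (m i x - y)^p))"
    unfolding sig w_def f_def by (simp add: sum_distrib_left mult.assoc)
  finally show ?thesis unfolding I_def .
qed


lemma ref_alg:
  fixes \<mu> :: "nat \<Rightarrow> 'a::real_normed_vector \<Rightarrow> real"
  assumes p: "p = 1 \<or> p = 2" and eps: "\<epsilon> \<ge> 0" and lam: "\<forall>i\<in>{1..N}. 0 < lam i"
    and fm: "\<forall>i\<in>{1..N}. is_fprob (\<mu> i)" and j: "j \<in> {1..N}" and spec: "ref_spec p \<epsilon> N lam \<mu> j \<pi> m"
  shows "Psi p N lam \<mu> (push (\<mu> j) m) \<le> (1 + \<epsilon>) * (\<Sum>i\<in>{1..N}-{j}. lam i * Wpp p (\<mu> j) (\<mu> i))"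
proof -
  have fj: "is_fprob (\<mu> j)" using fm j by blast
  have pj: "\<pi> j = diag_plan (\<mu> j)" using spec unfolding ref_spec_def by blast
  have opt: "\<forall>i\<in>{1..N}. i \<noteq> j \<longrightarrow> optimal_plan p (\<mu> j) (\<mu> i) (\<pi> i)" using spec unfolding ref_spec_def by blast
  have sp: "\<forall>x\<in>supp (\<mu> j). fobj p N lam \<mu> (\<mu> j) \<pi> x (m x) \<le> (1 + \<epsilon>) * Inf (range (fobj p N lam \<mu> (\<mu> j) \<pi> x))"
    using spec unfolding ref_spec_def by blast
  have coup: "\<forall>i\<in>{1..N}. is_coupling (\<mu> j) (\<mu> i) (\<pi> i)"
  proof
    fix i assume i: "i \<in> {1..N}"
    show "is_coupling (\<mu> j) (\<mu> i) (\<pi> i)"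
    proof (cases "i = j")
      case True thus ?thesis using pj diag_coupling[OF fj] by simp
    next
      case False thus ?thesis using opt i unfolding optimal_plan_def by blast
    qed
  qed
  have "Psi p N lam \<mu> (push (\<mu> j) m) \<le> (\<Sum>i\<in>{1..N}. lam i * (\<Sum>x\<in>supp (\<mu> j). \<Sum>y\<in>supp (\<mu> i). \<pi> i x y * norm (m x - y)^p))"
    unfolding Psi_def
  proof (rule sum_mono)
    fix i assume i: "i \<in> {1..N}"
    show "lam i * Wpp p (push (\<mu> j) m) (\<mu> i) \<le> lam i * (\<Sum>x\<in>supp (\<mu> j). \<Sum>y\<in>supp (\<mu> i). \<pi> i x y * norm (m x - y)^p)"
      using push_W[OF fj _ , of "\<mu> i" "\<pi> i" p m] fm coup i lam by (intro mult_left_mono) (auto intro: less_imp_le)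
  qed
  also have "\<dots> \<le> (1 + \<epsilon>) * (\<Sum>i\<in>{1..N}. lam i * tcost p (\<mu> j) (\<mu> i) (\<pi> i))"
    using core[OF eps _ fj coup sp] lam by (auto intro: less_imp_le)
  also have "(\<Sum>i\<in>{1..N}. lam i * tcost p (\<mu> j) (\<mu> i) (\<pi> i)) = (\<Sum>i\<in>{1..N}-{j}. lam i * Wpp p (\<mu> j) (\<mu> i))"
  proof -
    have "(\<Sum>i\<in>{1..N}. lam i * tcost p (\<mu> j) (\<mu> i) (\<pi> i)) = lam j * tcost p (\<mu> j) (\<mu> j) (\<pi> j) + (\<Sum>i\<in>{1..N}-{j}. lam i * tcost p (\<mu> j) (\<mu> i) (\<pi> i))"
      using j by (simp add: sum.remove)
    also have "tcost p (\<mu> j) (\<mu> j) (\<pi> j) = 0" using pj tcost_diag p by auto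
    also have "(\<Sum>i\<in>{1..N}-{j}. lam i * tcost p (\<mu> j) (\<mu> i) (\<pi> i)) = (\<Sum>i\<in>{1..N}-{j}. lam i * Wpp p (\<mu> j) (\<mu> i))"
      using opt unfolding optimal_plan_def by (intro sum.cong refl) auto
    finally show ?thesis by simp
  qed
  finally show ?thesis .
qed

lemma pair_alg:
  fixes \<mu> :: "nat \<Rightarrow> 'a::real_normed_vector \<Rightarrow> real"
  assumes p: "p = 1 \<or> p = 2" and eps: "\<epsilon> \<ge> 0" and lam: "\<forall>i\<in>{1..N}. 0 < lam i" and ls: "sum lam {1..N} = 1"
    and fm: "\<forall>i\<in>{1..N}. is_fprob (\<mu> i)" and spec: "pair_spec p \<epsilon> N lam \<mu> \<pi> m"
  shows "Psi p N lam \<mu> (pair_output N lam \<mu> m) \<le> (1 + \<epsilon>) * (\<Sum>i\<in>{1..N}. lam i * (\<Sum>j\<in>{1..N}-{i}. lam j * Wpp p (\<mu> i) (\<mu> j)))"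
proof -
  define I where "I = {1..N}"
  have s1: "\<forall>i\<in>I. \<pi> i i = diag_plan (\<mu> i)" using spec unfolding pair_spec_def I_def by blast
  have s2: "\<forall>i\<in>I. \<forall>j\<in>I. i < j \<longrightarrow> optimal_plan p (\<mu> i) (\<mu> j) (\<pi> i j) \<and> \<pi> j i = (\<lambda>x y. \<pi> i j y x)"
    using spec unfolding pair_spec_def I_def by blast
  have s3: "\<forall>i\<in>I. \<forall>x\<in>supp (\<mu> i). fobj p N lam \<mu> (\<mu> i) (\<pi> i) x (m i x) \<le> (1 + \<epsilon>) * Inf (range (fobj p N lam \<mu> (\<mu> i) (\<pi> i) x))"
    using spec unfolding pair_spec_def I_def by blast
  have fmI: "\<forall>i\<in>I. is_fprob (\<mu> i)" using fm unfolding I_def .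
  have lam0: "\<forall>i\<in>I. lam i \<ge> 0" using lam unfolding I_def by (meson less_imp_le)
  have coup: "is_coupling (\<mu> i) (\<mu> j) (\<pi> i j) \<and> (i \<noteq> j \<longrightarrow> tcost p (\<mu> i) (\<mu> j) (\<pi> i j) = Wpp p (\<mu> i) (\<mu> j))"
    if i: "i \<in> I" and j: "j \<in> I" for i j
  proof (cases i j rule: linorder_cases)
    case less
    thus ?thesis using s2 i j unfolding optimal_plan_def by blast
  next
    case equal
    have "is_fprob (\<mu> i)" using fmI i by blast
    thus ?thesis using s1 i equal diag_coupling by simp
  next
    case greater
    have o: "optimal_plan p (\<mu> j) (\<mu> i) (\<pi> j i)" and t: "\<pi> i j = (\<lambda>x y. \<pi> j i y x)"
      using s2 i j greater by blast+
    have "is_coupling (\<mu> i) (\<mu> j) (\<pi> i j)" using t o transp_coupling unfolding optimal_plan_def by metis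
    moreover have "tcost p (\<mu> i) (\<mu> j) (\<pi> i j) = Wpp p (\<mu> i) (\<mu> j)"
      using t o tcost_transp[of p "\<mu> i" "\<mu> j" "\<pi> j i"] Wpp_sym[of p "\<mu> i" "\<mu> j"] unfolding optimal_plan_def by simp
    ultimately show ?thesis by blast
  qed
  have "Psi p N lam \<mu> (pair_output N lam \<mu> m) \<le> (\<Sum>j\<in>I. lam j * (\<Sum>i\<in>I. lam i * (\<Sum>x\<in>supp (\<mu> i). \<Sum>y\<in>supp (\<mu> j). \<pi> i j x y * norm (m i x - y)^p)))"
    unfolding Psi_def I_def[symmetric]
  proof (rule sum_mono)
    fix j assume j: "j \<in> I"
    have "Wpp p (pair_output N lam \<mu> m) (\<mu> j) \<le> (\<Sum>i\<in>I. lam i * (\<Sum>x\<in>supp (\<mu> i). \<Sum>y\<in>supp (\<mu> j). \<pi> i j x y * norm (m i x - y)^p))"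
      unfolding I_def using coup j by (intro pair_W[OF lam fm _ _ ls]) (auto simp: I_def)
    thus "lam j * Wpp p (pair_output N lam \<mu> m) (\<mu> j) \<le> lam j * (\<Sum>i\<in>I. lam i * (\<Sum>x\<in>supp (\<mu> i). \<Sum>y\<in>supp (\<mu> j). \<pi> i j x y * norm (m i x - y)^p))"
      using lam0 j by (intro mult_left_mono) auto
  qed
  also have "\<dots> = (\<Sum>i\<in>I. lam i * (\<Sum>j\<in>I. lam j * (\<Sum>x\<in>supp (\<mu> i). \<Sum>y\<in>supp (\<mu> j). \<pi> i j x y * norm (m i x - y)^p)))"
    by (rule swap_w)
  also have "\<dots> \<le> (\<Sum>i\<in>I. lam i * ((1 + \<epsilon>) * (\<Sum>j\<in>I. lam j * tcost p (\<mu> i) (\<mu> j) (\<pi> i j))))"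
  proof (rule sum_mono)
    fix i assume i: "i \<in> I"
    have "(\<Sum>j\<in>I. lam j * (\<Sum>x\<in>supp (\<mu> i). \<Sum>y\<in>supp (\<mu> j). \<pi> i j x y * norm (m i x - y)^p))
        \<le> (1 + \<epsilon>) * (\<Sum>j\<in>I. lam j * tcost p (\<mu> i) (\<mu> j) (\<pi> i j))"
      unfolding I_def
    proof (rule core[OF eps])
      show "\<forall>j\<in>{1..N}. 0 \<le> lam j" using lam by (auto intro: less_imp_le)
      show "is_fprob (\<mu> i)" using fmI i by blast
      show "\<forall>j\<in>{1..N}. is_coupling (\<mu> i) (\<mu> j) (\<pi> i j)" using coup i unfolding I_def by blast
      show "\<forall>x\<in>supp (\<mu> i). fobj p N lam \<mu> (\<mu> i) (\<pi> i) x (m i x) \<le> (1 + \<epsilon>) * Inf (range (fobj p N lam \<mu> (\<mu> i) (\<pi> i) x))"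
        using s3 i by blast
    qed
    thus "lam i * (\<Sum>j\<in>I. lam j * (\<Sum>x\<in>supp (\<mu> i). \<Sum>y\<in>supp (\<mu> j). \<pi> i j x y * norm (m i x - y)^p))
        \<le> lam i * ((1 + \<epsilon>) * (\<Sum>j\<in>I. lam j * tcost p (\<mu> i) (\<mu> j) (\<pi> i j)))"
      using lam0 i by (intro mult_left_mono) auto
  qed
  also have "\<dots> = (1 + \<epsilon>) * (\<Sum>i\<in>I. lam i * (\<Sum>j\<in>I-{i}. lam j * Wpp p (\<mu> i) (\<mu> j)))"
  proof -
    have "(\<Sum>j\<in>I. lam j * tcost p (\<mu> i) (\<mu> j) (\<pi> i j)) = (\<Sum>j\<in>I-{i}. lam j * Wpp p (\<mu> i) (\<mu> j))" if i: "i \<in> I" for i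
    proof -
      have "(\<Sum>j\<in>I. lam j * tcost p (\<mu> i) (\<mu> j) (\<pi> i j)) = lam i * tcost p (\<mu> i) (\<mu> i) (\<pi> i i) + (\<Sum>j\<in>I-{i}. lam j * tcost p (\<mu> i) (\<mu> j) (\<pi> i j))"
        using i unfolding I_def by (simp add: sum.remove)
      also have "tcost p (\<mu> i) (\<mu> i) (\<pi> i i) = 0" using s1 i tcost_diag p by auto
      also have "(\<Sum>j\<in>I-{i}. lam j * tcost p (\<mu> i) (\<mu> j) (\<pi> i j)) = (\<Sum>j\<in>I-{i}. lam j * Wpp p (\<mu> i) (\<mu> j))"
        using coup i by (intro sum.cong refl) auto
      finally show ?thesis by simp
    qed
    thus ?thesis by (simp add: sum_distrib_left mult.left_commute)
  qed
  finally show ?thesis unfolding I_def .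
qed

lemma lim_le:
  fixes X C \<Psi> :: real
  assumes h: "\<forall>\<delta>>0. X \<le> C * (\<Psi> + \<delta>)" and C: "C \<ge> 0"
  shows "X \<le> C * \<Psi>"
proof (cases "C = 0")
  case True thus ?thesis using h[rule_format, of 1] by simp
next
  case False
  hence Cp: "C > 0" using C by simp
  show ?thesis
  proof (rule field_le_epsilon)
    fix e :: real assume e: "e > 0"
    have "X \<le> C * (\<Psi> + e / C)" using h e Cp by simp
    thus "X \<le> C * \<Psi> + e" using Cp by (simp add: distrib_left)
  qed
qed


theorem corollary4p5:
  fixes p N :: nat and \<epsilon> :: real and lam :: "nat \<Rightarrow> real"
    and \<mu> :: "nat \<Rightarrow> 'a::euclidean_space \<Rightarrow> real" and \<nu>hat :: "'a \<Rightarrow> real"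
  assumes "p = 1 \<or> p = 2" and "\<epsilon> \<ge> 0" and "p = 2 \<longrightarrow> \<epsilon> = 0"
    and "N \<ge> 2"
    and "\<forall>i\<in>{1..N}. 0 < lam i \<and> lam i < 1" and "(\<Sum>i\<in>{1..N}. lam i) = 1"
    and "\<forall>i\<in>{1..N}. is_fprob (\<mu> i)"
    and "is_fprob \<nu>hat"
    and "\<forall>\<nu>. is_fprob \<nu> \<longrightarrow> Psi p N lam \<mu> \<nu>hat \<le> Psi p N lam \<mu> \<nu>"
  shows "(\<forall>\<pi> m. ref_spec p \<epsilon> N lam \<mu> 1 \<pi> m \<longrightarrow>
            Psi p N lam \<mu> (push (\<mu> 1) m) \<le> (1 + \<epsilon>) / lam 1 * Psi p N lam \<mu> \<nu>hat)
       \<and> (\<forall>\<pi> m. (\<forall>j\<in>{1..N}. ref_spec p \<epsilon> N lam \<mu> j (\<pi> j) (m j)) \<longrightarrow>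
            (\<Sum>j\<in>{1..N}. lam j * Psi p N lam \<mu> (push (\<mu> j) (m j)))
              \<le> 2 * (1 + \<epsilon>) * Psi p N lam \<mu> \<nu>hat)
       \<and> (\<forall>\<pi> m. pair_spec p \<epsilon> N lam \<mu> \<pi> m \<longrightarrow>
            Psi p N lam \<mu> (pair_output N lam \<mu> m) \<le> 2 * (1 + \<epsilon>) * Psi p N lam \<mu> \<nu>hat)"
proof -
  note p = assms(1) and eps = assms(2) and N2 = assms(4) and ls = assms(6) and fm = assms(7) and fn = assms(8)
  have lam: "\<forall>i\<in>{1..N}. 0 < lam i" using assms(5) by blast
  have lam0: "\<forall>i\<in>{1..N}. 0 \<le> lam i" using lam by (meson less_imp_le)
  have l1: "(1::nat) \<in> {1..N}" using N2 by simp
  define \<Psi> where "\<Psi> = Psi p N lam \<mu> \<nu>hat"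
  have P1: "\<forall>\<pi> m. ref_spec p \<epsilon> N lam \<mu> 1 \<pi> m \<longrightarrow>
            Psi p N lam \<mu> (push (\<mu> 1) m) \<le> (1 + \<epsilon>) / lam 1 * \<Psi>"
  proof (intro allI impI)
    fix \<pi> m assume r: "ref_spec p \<epsilon> N lam \<mu> 1 \<pi> m"
    have R: "Psi p N lam \<mu> (push (\<mu> 1) m) \<le> (1 + \<epsilon>) * (\<Sum>i\<in>{1..N}-{1}. lam i * Wpp p (\<mu> 1) (\<mu> i))"
      by (rule ref_alg[OF p eps lam fm l1 r])
    show "Psi p N lam \<mu> (push (\<mu> 1) m) \<le> (1 + \<epsilon>) / lam 1 * \<Psi>"
    proof (rule lim_le)
      show "0 \<le> (1 + \<epsilon>) / lam 1" using eps lam l1 by (simp add: less_imp_le)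
      show "\<forall>\<delta>>0. Psi p N lam \<mu> (push (\<mu> 1) m) \<le> (1 + \<epsilon>) / lam 1 * (\<Psi> + \<delta>)"
      proof (intro allI impI)
        fix \<delta> :: real assume d: "\<delta> > 0"
        obtain GL where G1: "\<forall>i\<in>{1..N}. \<forall>j\<in>{1..N}. Wpp p (\<mu> j) (\<mu> i) \<le> GL j i"
          and G2: "\<forall>j\<in>{1..N}. (\<Sum>i\<in>{1..N}-{j}. lam i * GL j i) \<le> (\<Psi> + \<delta>) / lam j"
          using Gbound[OF p lam ls fm fn d] unfolding \<Psi>_def by blast
        have "(\<Sum>i\<in>{1..N}-{1}. lam i * Wpp p (\<mu> 1) (\<mu> i)) \<le> (\<Sum>i\<in>{1..N}-{1}. lam i * GL 1 i)"
          using G1 lam0 l1 by (intro sum_mono mult_left_mono) auto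
        also have "\<dots> \<le> (\<Psi> + \<delta>) / lam 1" using G2 l1 by blast
        finally have "(1 + \<epsilon>) * (\<Sum>i\<in>{1..N}-{1}. lam i * Wpp p (\<mu> 1) (\<mu> i)) \<le> (1 + \<epsilon>) * ((\<Psi> + \<delta>) / lam 1)"
          using eps by (intro mult_left_mono) auto
        thus "Psi p N lam \<mu> (push (\<mu> 1) m) \<le> (1 + \<epsilon>) / lam 1 * (\<Psi> + \<delta>)" using R by simp
      qed
    qed
  qed
  have P2: "\<forall>\<pi> m. (\<forall>j\<in>{1..N}. ref_spec p \<epsilon> N lam \<mu> j (\<pi> j) (m j)) \<longrightarrow>
            (\<Sum>j\<in>{1..N}. lam j * Psi p N lam \<mu> (push (\<mu> j) (m j))) \<le> 2 * (1 + \<epsilon>) * \<Psi>"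
  proof (intro allI impI)
    fix \<pi> m assume r: "\<forall>j\<in>{1..N}. ref_spec p \<epsilon> N lam \<mu> j (\<pi> j) (m j)"
    have R: "(\<Sum>j\<in>{1..N}. lam j * Psi p N lam \<mu> (push (\<mu> j) (m j))) \<le>
        (\<Sum>j\<in>{1..N}. lam j * ((1 + \<epsilon>) * (\<Sum>i\<in>{1..N}-{j}. lam i * Wpp p (\<mu> j) (\<mu> i))))"
    proof (rule sum_mono)
      fix j assume j: "j \<in> {1..N}"
      have "Psi p N lam \<mu> (push (\<mu> j) (m j)) \<le> (1 + \<epsilon>) * (\<Sum>i\<in>{1..N}-{j}. lam i * Wpp p (\<mu> j) (\<mu> i))"
        using r j by (intro ref_alg[OF p eps lam fm j]) blast
      thus "lam j * Psi p N lam \<mu> (push (\<mu> j) (m j)) \<le> lam j * ((1 + \<epsilon>) * (\<Sum>i\<in>{1..N}-{j}. lam i * Wpp p (\<mu> j) (\<mu> i)))"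
        using lam0 j by (intro mult_left_mono) auto
    qed
    show "(\<Sum>j\<in>{1..N}. lam j * Psi p N lam \<mu> (push (\<mu> j) (m j))) \<le> 2 * (1 + \<epsilon>) * \<Psi>"
    proof (rule lim_le)
      show "0 \<le> 2 * (1 + \<epsilon>)" using eps by simp
      show "\<forall>\<delta>>0. (\<Sum>j\<in>{1..N}. lam j * Psi p N lam \<mu> (push (\<mu> j) (m j))) \<le> 2 * (1 + \<epsilon>) * (\<Psi> + \<delta>)"
      proof (intro allI impI)
        fix \<delta> :: real assume d: "\<delta> > 0"
        obtain GL where G1: "\<forall>i\<in>{1..N}. \<forall>j\<in>{1..N}. Wpp p (\<mu> j) (\<mu> i) \<le> GL j i"
          and G3: "(\<Sum>j\<in>{1..N}. lam j * (\<Sum>i\<in>{1..N}-{j}. lam i * GL j i)) \<le> 2 * (\<Psi> + \<delta>)"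
          using Gbound[OF p lam ls fm fn d] unfolding \<Psi>_def by blast
        have "(\<Sum>j\<in>{1..N}. lam j * ((1 + \<epsilon>) * (\<Sum>i\<in>{1..N}-{j}. lam i * Wpp p (\<mu> j) (\<mu> i))))
            = (1 + \<epsilon>) * (\<Sum>j\<in>{1..N}. lam j * (\<Sum>i\<in>{1..N}-{j}. lam i * Wpp p (\<mu> j) (\<mu> i)))"
          by (simp add: sum_distrib_left mult.left_commute)
        also have "(\<Sum>j\<in>{1..N}. lam j * (\<Sum>i\<in>{1..N}-{j}. lam i * Wpp p (\<mu> j) (\<mu> i)))
            \<le> (\<Sum>j\<in>{1..N}. lam j * (\<Sum>i\<in>{1..N}-{j}. lam i * GL j i))"
          using G1 lam0 by (intro sum_mono mult_left_mono) auto
        finally have "(\<Sum>j\<in>{1..N}. lam j * ((1 + \<epsilon>) * (\<Sum>i\<in>{1..N}-{j}. lam i * Wpp p (\<mu> j) (\<mu> i))))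
            \<le> (1 + \<epsilon>) * (2 * (\<Psi> + \<delta>))"
          using G3 eps by (smt (verit, best) mult_left_mono)
        moreover have "(1 + \<epsilon>) * (2 * (\<Psi> + \<delta>)) = 2 * (1 + \<epsilon>) * (\<Psi> + \<delta>)" by (simp add: algebra_simps)
        ultimately show "(\<Sum>j\<in>{1..N}. lam j * Psi p N lam \<mu> (push (\<mu> j) (m j))) \<le> 2 * (1 + \<epsilon>) * (\<Psi> + \<delta>)"
          using R by linarith
      qed
    qed
  qed
  have P3: "\<forall>\<pi> m. pair_spec p \<epsilon> N lam \<mu> \<pi> m \<longrightarrow>
            Psi p N lam \<mu> (pair_output N lam \<mu> m) \<le> 2 * (1 + \<epsilon>) * \<Psi>"
  proof (intro allI impI)
    fix \<pi> m assume r: "pair_spec p \<epsilon> N lam \<mu> \<pi> m"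
    have R: "Psi p N lam \<mu> (pair_output N lam \<mu> m) \<le> (1 + \<epsilon>) * (\<Sum>i\<in>{1..N}. lam i * (\<Sum>j\<in>{1..N}-{i}. lam j * Wpp p (\<mu> i) (\<mu> j)))"
      by (rule pair_alg[OF p eps lam ls fm r])
    show "Psi p N lam \<mu> (pair_output N lam \<mu> m) \<le> 2 * (1 + \<epsilon>) * \<Psi>"
    proof (rule lim_le)
      show "0 \<le> 2 * (1 + \<epsilon>)" using eps by simp
      show "\<forall>\<delta>>0. Psi p N lam \<mu> (pair_output N lam \<mu> m) \<le> 2 * (1 + \<epsilon>) * (\<Psi> + \<delta>)"
      proof (intro allI impI)
        fix \<delta> :: real assume d: "\<delta> > 0"
        obtain GL where G1: "\<forall>i\<in>{1..N}. \<forall>j\<in>{1..N}. Wpp p (\<mu> j) (\<mu> i) \<le> GL j i"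
          and G3: "(\<Sum>j\<in>{1..N}. lam j * (\<Sum>i\<in>{1..N}-{j}. lam i * GL j i)) \<le> 2 * (\<Psi> + \<delta>)"
          using Gbound[OF p lam ls fm fn d] unfolding \<Psi>_def by blast
        have "(\<Sum>i\<in>{1..N}. lam i * (\<Sum>j\<in>{1..N}-{i}. lam j * Wpp p (\<mu> i) (\<mu> j)))
            \<le> (\<Sum>i\<in>{1..N}. lam i * (\<Sum>j\<in>{1..N}-{i}. lam j * GL i j))"
          using G1 lam0 by (intro sum_mono mult_left_mono) auto
        also have "\<dots> \<le> 2 * (\<Psi> + \<delta>)" using G3 by simp
        finally have "(1 + \<epsilon>) * (\<Sum>i\<in>{1..N}. lam i * (\<Sum>j\<in>{1..N}-{i}. lam j * Wpp p (\<mu> i) (\<mu> j))) \<le> (1 + \<epsilon>) * (2 * (\<Psi> + \<delta>))"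
          using eps by (intro mult_left_mono) auto
        moreover have "(1 + \<epsilon>) * (2 * (\<Psi> + \<delta>)) = 2 * (1 + \<epsilon>) * (\<Psi> + \<delta>)" by (simp add: algebra_simps)
        ultimately show "Psi p N lam \<mu> (pair_output N lam \<mu> m) \<le> 2 * (1 + \<epsilon>) * (\<Psi> + \<delta>)" using R by linarith
      qed
    qed
  qed
  show ?thesis using P1 P2 P3 unfolding \<Psi>_def by blast
qed
end
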